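(* Let $f: \{0, 1\}^n \to \{0, 1\}$ be a Boolean function with M\"obius support $\mathcal{S}_f$. For any two distinct sets $S,T \in \mathcal{S}_f$ there exists a set $p(\{S, T\}) \subseteq \mathcal{S}_f$ such that (i) $p(\{S, T\}) \neq \{S,T\}$; (ii) $|p(\{S, T\})| = 2$ if $S \cup T \notin \mathcal{S}_f$ and $|p(\{S, T\})| = 1$ if $S \cup T \in \mathcal{S}_f$; and (iii) $\bigcup_{U \in p(\{S, T\})} U= S \cup T$.
   Context: Every $f:\{0,1\}^n\to\{0,1\}$ has a unique M\"obius expansion $f=\sum_{S\subseteq[n]}\widetilde f(S)\mathsf{AND}_S$ with real coefficients, where $\mathsf{AND}_S(x)=\prod_{i\in S}x_i$; its M\"obius support is $\mathcal{S}_f=\{S\subseteq[n]:\widetilde f(S)\ne0\}$. *)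

theory Defs
  imports Complex_Main "HOL-Library.FuncSet"
begin

text \<open>Points of the cube {0,1}^n are represented by the set of coordinates equal to 1,
  a subset of {..<n}.\<close>

definition AND_fn :: "nat set \<Rightarrow> nat set \<Rightarrow> real" where
  "AND_fn S x = (if S \<subseteq> x then 1 else 0)"

definition bool_val :: "bool \<Rightarrow> real" where
  "bool_val b = (if b then 1 else 0)"

definition mobius_coeffs :: "nat \<Rightarrow> (nat set \<Rightarrow> bool) \<Rightarrow> (nat set \<Rightarrow> real)" where
  "mobius_coeffs n f = (THE c. c \<in> extensional (Pow {..<n}) \<and>
      (\<forall>x \<in> Pow {..<n}. bool_val (f x) = (\<Sum>S \<in> Pow {..<n}. c S * AND_fn S x)))"

definition mobius_support :: "nat \<Rightarrow> (nat set \<Rightarrow> bool) \<Rightarrow> nat set set" where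
  "mobius_support n f = {S. S \<subseteq> {..<n} \<and> mobius_coeffs n f S \<noteq> 0}"

end

theory Submission
  imports Defs
begin

lemma red_sum:
  assumes "finite A" "x \<subseteq> A"
  shows "(\<Sum>S\<in>Pow A. c S * AND_fn S x) = (\<Sum>S\<in>Pow x. c S)"
  by (rule sum.mono_neutral_cong_right) (use assms in \<open>auto simp: AND_fn_def\<close>)

lemma mob_zero:
  assumes "finite A" "\<forall>x\<in>Pow A. (\<Sum>S\<in>Pow A. c S * AND_fn S x) = 0"
  shows "\<forall>x\<in>Pow A. c x = (0::real)"
proof -
  have "\<And>x. x \<subseteq> A \<Longrightarrow> c x = 0"
  proof -
    fix x show "x \<subseteq> A \<Longrightarrow> c x = 0"
    proof (induction "card x" arbitrary: x rule: less_induct)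
      case less
      have fx: "finite x" using less.prems assms(1) finite_subset by blast
      have "0 = (\<Sum>S\<in>Pow x. c S)" using assms less.prems red_sum by auto
      also have "\<dots> = c x + (\<Sum>S\<in>Pow x - {x}. c S)"
        using fx by (simp add: sum.remove[of "Pow x" x])
      also have "(\<Sum>S\<in>Pow x - {x}. c S) = 0"
      proof (rule sum.neutral, rule ballI)
        fix S assume "S \<in> Pow x - {x}"
        then have "S \<subset> x" by auto
        then show "c S = 0" using less.hyps less.prems fx psubset_card_mono by blast
      qed
      finally show ?case by simp
    qed
  qed
  then show ?thesis by auto
qed

lemma mob_exists:
  assumes "finite A"
  shows "\<exists>c. c \<in> extensional (Pow A) \<and> (\<forall>x\<in>Pow A. (h x::real) = (\<Sum>S\<in>Pow A. c S * AND_fn S x))"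
proof -
  define g where "g S = (\<Sum>T\<in>Pow S. (-1) ^ card T * h T)" for S
  define c where "c = restrict (\<lambda>S. (-1) ^ card S * g S) (Pow A)"
  have "\<forall>x\<in>Pow A. h x = (\<Sum>S\<in>Pow A. c S * AND_fn S x)"
  proof
    fix x assume x: "x \<in> Pow A"
    have fx: "finite x" using x assms finite_subset by blast
    have "h x = (\<Sum>T\<in>Pow x. (-1) ^ card T * g T)"
      by (rule inclusion_exclusion_symmetric[OF _ fx]) (simp add: g_def)
    also have "\<dots> = (\<Sum>T\<in>Pow x. c T)"
      using x by (intro sum.cong) (auto simp: c_def)
    also have "\<dots> = (\<Sum>S\<in>Pow A. c S * AND_fn S x)"
      using red_sum[OF assms] x by auto
    finally show "h x = (\<Sum>S\<in>Pow A. c S * AND_fn S x)" .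
  qed
  moreover have "c \<in> extensional (Pow A)" unfolding c_def by simp
  ultimately show ?thesis by blast
qed

lemma mob_coeffs_prop:
  "mobius_coeffs n f \<in> extensional (Pow {..<n}) \<and>
   (\<forall>x \<in> Pow {..<n}. bool_val (f x) = (\<Sum>S \<in> Pow {..<n}. mobius_coeffs n f S * AND_fn S x))"
proof -
  let ?P = "\<lambda>c. c \<in> extensional (Pow {..<n}) \<and>
      (\<forall>x \<in> Pow {..<n}. bool_val (f x) = (\<Sum>S \<in> Pow {..<n}. c S * AND_fn S x))"
  obtain c where c: "?P c" using mob_exists[of "{..<n}" "\<lambda>x. bool_val (f x)"] by auto
  have u: "d = c" if d: "?P d" for d
  proof -
    have "\<forall>x\<in>Pow {..<n}. (\<Sum>S\<in>Pow {..<n}. (d S - c S) * AND_fn S x) = 0"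
      using c d by (simp add: left_diff_distrib sum_subtractf)
    from mob_zero[OF _ this] have "\<forall>x\<in>Pow {..<n}. d x = c x" by auto
    then show ?thesis using c d by (intro extensionalityI[of _ "Pow {..<n}"]) auto
  qed
  have "?P (THE c. ?P c)" by (rule theI[of ?P c, OF c u])
  then show ?thesis unfolding mobius_coeffs_def .
qed

lemma sq_coeff:
  assumes W: "W \<subseteq> {..<n}"
  shows "mobius_coeffs n f W = (\<Sum>U\<in>Pow {..<n}. \<Sum>V\<in>Pow {..<n}.
            (if U \<union> V = W then mobius_coeffs n f U * mobius_coeffs n f V else 0))"
proof -
  let ?A = "Pow {..<n::nat}"
  let ?c = "mobius_coeffs n f"
  define d where "d W = (\<Sum>U\<in>?A. \<Sum>V\<in>?A. (if U \<union> V = W then ?c U * ?c V else 0))" for W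
  have rep: "\<forall>x\<in>?A. bool_val (f x) = (\<Sum>S\<in>?A. ?c S * AND_fn S x)"
    using mob_coeffs_prop by blast
  have "\<forall>x\<in>?A. (\<Sum>S\<in>?A. (d S - ?c S) * AND_fn S x) = 0"
  proof
    fix x assume x: "x \<in> ?A"
    have "bool_val (f x) = bool_val (f x) * bool_val (f x)" by (simp add: bool_val_def)
    also have "\<dots> = (\<Sum>U\<in>?A. ?c U * AND_fn U x) * (\<Sum>V\<in>?A. ?c V * AND_fn V x)"
      using rep x by simp
    also have "\<dots> = (\<Sum>U\<in>?A. \<Sum>V\<in>?A. ?c U * ?c V * AND_fn (U \<union> V) x)"
      by (simp add: sum_product) (intro sum.cong refl, auto simp: AND_fn_def)
    also have "\<dots> = (\<Sum>U\<in>?A. \<Sum>V\<in>?A. \<Sum>S\<in>?A. (if U \<union> V = S then ?c U * ?c V else 0) * AND_fn S x)"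
    proof (intro sum.cong refl)
      fix U V assume "U \<in> ?A" "V \<in> ?A"
      then have "U \<union> V \<in> ?A" by auto
      then show "?c U * ?c V * AND_fn (U \<union> V) x =
          (\<Sum>S\<in>?A. (if U \<union> V = S then ?c U * ?c V else 0) * AND_fn S x)"
      proof -
        have "(\<Sum>S\<in>?A. (if U \<union> V = S then ?c U * ?c V else 0) * AND_fn S x) =
            (\<Sum>S\<in>?A. (if U \<union> V = S then ?c U * ?c V * AND_fn (U \<union> V) x else 0))"
          by (intro sum.cong refl) auto
        also have "\<dots> = ?c U * ?c V * AND_fn (U \<union> V) x"
          using \<open>U \<union> V \<in> ?A\<close> by (subst sum.delta') auto
        finally show ?thesis by simp
      qed
    qed
    also have "\<dots> = (\<Sum>U\<in>?A. \<Sum>S\<in>?A. \<Sum>V\<in>?A. (if U \<union> V = S then ?c U * ?c V else 0) * AND_fn S x)"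
      by (rule sum.cong[OF refl], rule sum.swap)
    also have "\<dots> = (\<Sum>S\<in>?A. \<Sum>U\<in>?A. \<Sum>V\<in>?A. (if U \<union> V = S then ?c U * ?c V else 0) * AND_fn S x)"
      by (rule sum.swap)
    also have "\<dots> = (\<Sum>S\<in>?A. d S * AND_fn S x)"
      by (rule sum.cong[OF refl]) (simp only: d_def sum_distrib_right)
    finally have "bool_val (f x) = (\<Sum>S\<in>?A. d S * AND_fn S x)" .
    then show "(\<Sum>S\<in>?A. (d S - ?c S) * AND_fn S x) = 0"
      using rep x by (simp add: left_diff_distrib sum_subtractf)
  qed
  from mob_zero[OF _ this] W have "d W - ?c W = 0" by auto
  then show ?thesis unfolding d_def by simp
qed

theorem claim4p5:
  fixes n :: nat and f :: "nat set \<Rightarrow> bool" and S T :: "nat set"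
  assumes "S \<in> mobius_support n f" and "T \<in> mobius_support n f" and "S \<noteq> T"
  shows "\<exists>P. P \<subseteq> mobius_support n f \<and> P \<noteq> {S, T}
           \<and> (S \<union> T \<notin> mobius_support n f \<longrightarrow> card P = 2)
           \<and> (S \<union> T \<in> mobius_support n f \<longrightarrow> card P = 1)
           \<and> \<Union> P = S \<union> T"
proof (cases "S \<union> T \<in> mobius_support n f")
  case True
  have "{S \<union> T} \<noteq> {S, T}"
  proof
    assume "{S \<union> T} = {S, T}"
    then have "S \<in> {S \<union> T}" "T \<in> {S \<union> T}" by blast+
    then show False using assms(3) by simp
  qed
  moreover have "{S \<union> T} \<subseteq> mobius_support n f" using True by blast
  moreover have "card {S \<union> T} = 1" by simp
  moreover have "\<Union> {S \<union> T} = S \<union> T" by simp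
  ultimately show ?thesis using True by blast
next
  case False
  let ?A = "Pow {..<n::nat}"
  let ?c = "mobius_coeffs n f"
  let ?W = "S \<union> T"
  have sS: "S \<subseteq> {..<n}" "?c S \<noteq> 0" and sT: "T \<subseteq> {..<n}" "?c T \<noteq> 0"
    using assms unfolding mobius_support_def by auto
  have W: "?W \<subseteq> {..<n}" using sS sT by auto
  have cW: "?c ?W = 0" using False W unfolding mobius_support_def by auto
  have "\<exists>U V. U \<in> mobius_support n f \<and> V \<in> mobius_support n f \<and> U \<noteq> V \<and> U \<union> V = ?W \<and> {U, V} \<noteq> {S, T}"
  proof (rule ccontr)
    assume H: "\<not> ?thesis"
    have eq: "(if U \<union> V = ?W then ?c U * ?c V else 0) =
        (if U = S \<and> V = T \<or> U = T \<and> V = S then ?c U * ?c V else 0)"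
      if "U \<in> ?A" "V \<in> ?A" for U V
    proof (cases "U \<union> V = ?W \<and> ?c U \<noteq> 0 \<and> ?c V \<noteq> 0")
      case True
      then have "U \<noteq> V" using cW by auto
      moreover have "U \<in> mobius_support n f" "V \<in> mobius_support n f"
        using True that unfolding mobius_support_def by auto
      moreover have "\<not> (U \<in> mobius_support n f \<and> V \<in> mobius_support n f \<and> U \<noteq> V \<and> U \<union> V = ?W \<and> {U, V} \<noteq> {S, T})"
      proof
        assume h: "U \<in> mobius_support n f \<and> V \<in> mobius_support n f \<and> U \<noteq> V \<and> U \<union> V = ?W \<and> {U, V} \<noteq> {S, T}"
        have "\<exists>U V. U \<in> mobius_support n f \<and> V \<in> mobius_support n f \<and> U \<noteq> V \<and> U \<union> V = ?W \<and> {U, V} \<noteq> {S, T}"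
          by (rule exI[of _ U], rule exI[of _ V], rule h)
        with H show False by contradiction
      qed
      ultimately have "{U, V} = {S, T}" using True by simp
      then show ?thesis using True by (auto simp: doubleton_eq_iff)
    next
      case False
      then show ?thesis by auto
    qed
    have "0 = (\<Sum>U\<in>?A. \<Sum>V\<in>?A. (if U \<union> V = ?W then ?c U * ?c V else 0))"
      using sq_coeff[OF W, of f] cW by simp
    also have "\<dots> = (\<Sum>U\<in>?A. \<Sum>V\<in>?A. (if U = S \<and> V = T \<or> U = T \<and> V = S then ?c U * ?c V else 0))"
      apply (rule sum.cong[OF refl])
      apply (rule sum.cong[OF refl])
      using eq by blast
    also have "\<dots> = (\<Sum>U\<in>?A. (if U = S then ?c S * ?c T else 0) + (if U = T then ?c T * ?c S else 0))"
    proof (intro sum.cong refl)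
      fix U assume "U \<in> ?A"
      have "(\<Sum>V\<in>?A. (if U = S \<and> V = T \<or> U = T \<and> V = S then ?c U * ?c V else 0)) =
            (\<Sum>V\<in>?A. (if U = S \<and> V = T then ?c U * ?c V else 0) + (if U = T \<and> V = S then ?c U * ?c V else 0))"
        apply (rule sum.cong[OF refl])
        using assms(3) by auto
      also have "\<dots> = (if U = S then ?c S * ?c T else 0) + (if U = T then ?c T * ?c S else 0)"
        using sS sT by (simp add: sum.distrib)
      finally show "(\<Sum>V\<in>?A. (if U = S \<and> V = T \<or> U = T \<and> V = S then ?c U * ?c V else 0)) =
            (if U = S then ?c S * ?c T else 0) + (if U = T then ?c T * ?c S else 0)" .
    qed
    also have "\<dots> = 2 * (?c S * ?c T)"
      using sS sT by (simp add: sum.distrib mult.commute)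
    finally show False using sS sT by simp
  qed
  then obtain U V where UV: "U \<in> mobius_support n f" "V \<in> mobius_support n f" "U \<noteq> V"
    "U \<union> V = ?W" "{U, V} \<noteq> {S, T}" by (elim exE conjE) (rule that)
  have "{U, V} \<subseteq> mobius_support n f" using UV by blast
  moreover have "card {U, V} = 2" using UV(3) by simp
  moreover have "\<Union> {U, V} = S \<union> T" using UV(4) by simp
  ultimately show ?thesis using UV(5) False by (intro exI[of _ "{U, V}"] conjI impI) simp_all
qed

end
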